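(* Let $G=\bigl((f_j)_{j=1}^n;(\mu^{R})_{\emptyset\ne R\subseteq[n]}\bigr)$ be an $n$-resource selection game with $f_1,\ldots,f_n$ continuous. (a) There exists a consumption profile $s$ in the $|P_G|$-resource selection game $\bigl((f_j)_{j\in P_G};(\mu^R)_{\emptyset\ne R\subseteq P_G}\bigr)$ such that $h^s_j=h_G$ for every $j\in P_G$. (b) If $P_G\ne[n]$, then $h_G>h_{G-P_G}$.
   Context: An $n$-resource selection game is $G=\bigl((f_j)_{j=1}^n;(\mu^{R})_{\emptyset\ne R\subseteq[n]}\bigr)$ with each $f_j:[0,\infty)\to\mathbb{R}$ nondecreasing and each $\mu^R\ge0$ (a game on a resource set $S$ is defined analogously with $S$ in place of $[n]$). A consumption profile assigns to each nonempty $R$ a vector $s(R)\ge0$ supported on $R$ with total $\mu^R$; loads $\mu^s_j=\sum_R s_j(R)$, costs $h^s_j=f_j(\mu^s_j)$. Equalization: for nondecreasing $g_1,\ldots,g_m:[0,\infty)\to\mathbb{R}\cup\{\mathrm{undefined}\}$, $\mathrm{eq}(g_1,\ldots,g_m)(\mu)=g_1(\mu_1)$ if there exist $\mu_1,\ldots,\mu_m\ge0$ summing to $\mu$ with $g_1(\mu_1)=\cdots=g_m(\mu_m)\in\mathbb{R}$, else $\mathrm{undefined}$. For nonempty $S\subseteq[n]$: $E_G(S)=\mathrm{eq}(f_k:k\in S)\bigl(\sum_{\emptyset\ne R\subseteq S}\mu^R\bigr)$; $M_G(S)$ is the set of nonempty $S'\subseteq S$ such that for every $0\le\mu\le\sum_{R\subseteq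 S,\,R\cap S'\ne\emptyset}\mu^R$, $\mathrm{eq}(f_k:k\in S')(\mu)\ne E_G(S)$ ($\mathrm{undefined}$ differs from every real); $D_G=\{S: E_G(S)\in\mathbb{R},\ M_G(S)=\emptyset\}$; $h_G=\max_{S\in D_G}E_G(S)$; $P_G=\bigcup\{S\in D_G:E_G(S)=h_G\}$. Resource removal: for $S\subsetneq[n]$, $G-S$ is the game with resources $[n]\setminus S$, cost functions $(f_j)_{j\notin S}$, and mass $\sum_{R:\,R\setminus S=R'}\mu^R$ for each nonempty $R'\subseteq[n]\setminus S$. *)

theory Defs
  imports Complex_Main
begin

text \<open>A resource selection game on a finite resource set N (subset of nat) is given by
cost functions f :: nat => real => real (f j used for j in N, on [0,inf)) and masses
mu :: nat set => real (mu R used for nonempty R subseteq N).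
Undefined values are modelled by None.\<close>

definition eq_sol :: "(nat \<Rightarrow> real \<Rightarrow> real) \<Rightarrow> nat set \<Rightarrow> real \<Rightarrow> real \<Rightarrow> bool" where
  "eq_sol f S' \<mu> c \<longleftrightarrow> (\<exists>x :: nat \<Rightarrow> real. (\<forall>k\<in>S'. 0 \<le> x k) \<and> sum x S' = \<mu>
        \<and> (\<forall>k\<in>S'. f k (x k) = c))"

definition eqz :: "(nat \<Rightarrow> real \<Rightarrow> real) \<Rightarrow> nat set \<Rightarrow> real \<Rightarrow> real option" where
  "eqz f S' \<mu> = (if \<exists>c. eq_sol f S' \<mu> c then Some (THE c. eq_sol f S' \<mu> c) else None)"

definition E_G :: "(nat \<Rightarrow> real \<Rightarrow> real) \<Rightarrow> (nat set \<Rightarrow> real) \<Rightarrow> nat set \<Rightarrow> real option" where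
  "E_G f mu S = eqz f S (\<Sum>R\<in>{R. R \<subseteq> S \<and> R \<noteq> {}}. mu R)"

definition M_G :: "(nat \<Rightarrow> real \<Rightarrow> real) \<Rightarrow> (nat set \<Rightarrow> real) \<Rightarrow> nat set \<Rightarrow> nat set set" where
  "M_G f mu S = {S'. S' \<noteq> {} \<and> S' \<subseteq> S \<and>
      (\<forall>\<mu>. 0 \<le> \<mu> \<and> \<mu> \<le> (\<Sum>R\<in>{R. R \<subseteq> S \<and> R \<inter> S' \<noteq> {}}. mu R)
            \<longrightarrow> eqz f S' \<mu> \<noteq> E_G f mu S)}"

definition D_G :: "(nat \<Rightarrow> real \<Rightarrow> real) \<Rightarrow> (nat set \<Rightarrow> real) \<Rightarrow> nat set \<Rightarrow> nat set set" where
  "D_G f mu N = {S. S \<noteq> {} \<and> S \<subseteq> N \<and> E_G f mu S \<noteq> None \<and> M_G f mu S = {}}"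

definition h_G :: "(nat \<Rightarrow> real \<Rightarrow> real) \<Rightarrow> (nat set \<Rightarrow> real) \<Rightarrow> nat set \<Rightarrow> real" where
  "h_G f mu N = Max ((\<lambda>S. the (E_G f mu S)) ` D_G f mu N)"

definition P_G :: "(nat \<Rightarrow> real \<Rightarrow> real) \<Rightarrow> (nat set \<Rightarrow> real) \<Rightarrow> nat set \<Rightarrow> nat set" where
  "P_G f mu N = \<Union>{S \<in> D_G f mu N. E_G f mu S = Some (h_G f mu N)}"

text \<open>Masses of the game G - S (resource set N - S).\<close>
definition mu_minus :: "(nat set \<Rightarrow> real) \<Rightarrow> nat set \<Rightarrow> nat set \<Rightarrow> nat set \<Rightarrow> real" where
  "mu_minus mu N S R' = (\<Sum>R\<in>{R. R \<subseteq> N \<and> R \<noteq> {} \<and> R - S = R'}. mu R)"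

definition consumption_profile :: "nat set \<Rightarrow> (nat set \<Rightarrow> real) \<Rightarrow> (nat set \<Rightarrow> nat \<Rightarrow> real) \<Rightarrow> bool" where
  "consumption_profile N mu s \<longleftrightarrow> (\<forall>R. R \<subseteq> N \<and> R \<noteq> {} \<longrightarrow>
      (\<forall>j. 0 \<le> s R j) \<and> (\<forall>j. j \<notin> R \<longrightarrow> s R j = 0) \<and> sum (s R) R = mu R)"

definition load :: "nat set \<Rightarrow> (nat set \<Rightarrow> nat \<Rightarrow> real) \<Rightarrow> nat \<Rightarrow> real" where
  "load N s j = (\<Sum>R\<in>{R. R \<subseteq> N \<and> R \<noteq> {}}. s R j)"

end

theory Submission imports Defs "HOL-Analysis.Analysis" begin

lemma compact_PiE_UNIV:
  fixes S :: "'i \<Rightarrow> 'b::topological_space set"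
  assumes "\<And>i. compact (S i)"
  shows "compact (PiE UNIV S)"
proof -
  have "compactin (product_topology (\<lambda>_. euclidean) UNIV) (PiE UNIV S)"
    using assms by (simp add: compactin_PiE)
  then show ?thesis by (simp add: euclidean_product_topology)
qed

lemma int_bounds:
  fixes g :: "real \<Rightarrow> real"
  assumes mono: "mono_on {0..} g" and cont: "continuous_on {0..} g" and a: "0 \<le> a" "a \<le> b"
  shows "integral {0..b} g - integral {0..a} g \<le> (b - a) * g b"
    and "(b - a) * g a \<le> integral {0..b} g - integral {0..a} g"
proof -
  have ib: "g integrable_on {0..b}"
    by (rule integrable_continuous_interval, rule continuous_on_subset[OF cont]) auto
  have iab: "g integrable_on {a..b}"
    by (rule integrable_continuous_interval, rule continuous_on_subset[OF cont]) (use a in auto)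
  have eq: "integral {0..b} g - integral {0..a} g = integral {a..b} g"
    using Henstock_Kurzweil_Integration.integral_combine[OF a ib] by simp
  have "integral {a..b} g \<le> integral {a..b} (\<lambda>_. g b)"
    by (rule integral_le[OF iab]) (use a in \<open>auto intro!: mono_onD[OF mono]\<close>)
  then show "integral {0..b} g - integral {0..a} g \<le> (b - a) * g b" using eq a by simp
  have "integral {a..b} (\<lambda>_. g a) \<le> integral {a..b} g"
    by (rule integral_le[OF _ iab]) (use a in \<open>auto intro!: mono_onD[OF mono]\<close>)
  then show "(b - a) * g a \<le> integral {0..b} g - integral {0..a} g" using eq a by simp
qed

lemma F_cont:
  fixes g :: "real \<Rightarrow> real"
  assumes cont: "continuous_on {0..} g"
  shows "continuous_on {0..M} (\<lambda>y. integral {0..y} g)"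
  by (rule indefinite_integral_continuous_1, rule integrable_continuous_interval,
      rule continuous_on_subset[OF cont]) auto

lemma load_upd:
  fixes s :: "nat set \<Rightarrow> nat \<Rightarrow> real"
  assumes fin: "finite N" and R: "R \<subseteq> N" "R \<noteq> {}"
  shows "load N (s(R := g)) m = load N s m + (g m - s R m)"
proof -
  let ?RS = "{R. R \<subseteq> N \<and> R \<noteq> {}}"
  have finRS: "finite ?RS" using fin by (auto intro: finite_subset[of _ "Pow N"])
  have RinRS: "R \<in> ?RS" using R by auto
  have "load N (s(R := g)) m = (s(R:=g)) R m + (\<Sum>R'\<in>?RS - {R}. (s(R:=g)) R' m)"
    unfolding load_def using sum.remove[OF finRS RinRS] by blast
  also have "(\<Sum>R'\<in>?RS - {R}. (s(R:=g)) R' m) = (\<Sum>R'\<in>?RS - {R}. s R' m)"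
    by (rule sum.cong) auto
  also have "load N s m = s R m + (\<Sum>R'\<in>?RS - {R}. s R' m)"
    unfolding load_def using sum.remove[OF finRS RinRS] by blast
  ultimately show ?thesis by (simp add: fun_upd_def)
qed

lemma equilibrium_exists:
  fixes N :: "nat set" and f :: "nat \<Rightarrow> real \<Rightarrow> real" and mu :: "nat set \<Rightarrow> real"
  assumes fin: "finite N"
    and mono: "\<And>j. j \<in> N \<Longrightarrow> mono_on {0..} (f j)"
    and cont: "\<And>j. j \<in> N \<Longrightarrow> continuous_on {0..} (f j)"
    and nonneg: "\<And>R. R \<subseteq> N \<Longrightarrow> R \<noteq> {} \<Longrightarrow> 0 \<le> mu R"
  shows "\<exists>s. consumption_profile N mu s \<and>
     (\<forall>R. R \<subseteq> N \<and> R \<noteq> {} \<longrightarrow> (\<forall>k\<in>R. 0 < s R k \<longrightarrow> (\<forall>j\<in>R. f k (load N s k) \<le> f j (load N s j))))"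
proof -
  define RS where "RS = {R. R \<subseteq> N \<and> R \<noteq> {}}"
  have finRS: "finite RS" unfolding RS_def using fin by (auto intro: finite_subset[of _ "Pow N"])
  have finR: "R \<in> RS \<Longrightarrow> finite R" for R unfolding RS_def using fin finite_subset by blast
  define Bx :: "(nat set \<Rightarrow> nat \<Rightarrow> real) set" where
    "Bx = PiE UNIV (\<lambda>R. PiE UNIV (\<lambda>j. if R \<in> RS \<and> j \<in> R then {0..mu R} else {0}))"
  define K where "K = Bx \<inter> {s. \<forall>R. R \<in> RS \<longrightarrow> sum (s R) R = mu R}"
  have coord: "continuous_on UNIV (\<lambda>s::nat set \<Rightarrow> nat \<Rightarrow> real. s R j)" for R j
    by (rule continuous_on_product_then_coordinatewise[OF continuous_on_product_coordinates])
  have cBx: "compact Bx" unfolding Bx_def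
    by (intro compact_PiE_UNIV) auto
  have clC: "closed {s::nat set \<Rightarrow> nat \<Rightarrow> real. \<forall>R. R \<in> RS \<longrightarrow> sum (s R) R = mu R}"
  proof (rule closed_Collect_all)
    fix R
    show "closed {s::nat set \<Rightarrow> nat \<Rightarrow> real. R \<in> RS \<longrightarrow> sum (s R) R = mu R}"
    proof (cases "R \<in> RS")
      case True
      have "closed {s::nat set \<Rightarrow> nat \<Rightarrow> real. sum (s R) R = mu R}"
        by (rule closed_Collect_eq) (auto intro!: continuous_intros coord)
      then show ?thesis using True by simp
    qed simp
  qed
  have cK: "compact K" unfolding K_def using cBx clC by (rule compact_Int_closed)
  define s0 :: "nat set \<Rightarrow> nat \<Rightarrow> real" where
    "s0 = (\<lambda>R j. if R \<in> RS \<and> j \<in> R then mu R / card R else 0)"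
  have "s0 \<in> K"
  proof -
    have "s0 \<in> Bx"
    proof -
      have "mu R / card R \<le> mu R" if "R \<in> RS" for R
      proof -
        have "card R \<ge> 1" using that finR[OF that] unfolding RS_def
          by (simp add: Suc_leI card_gt_0_iff)
        moreover have "0 \<le> mu R" using that nonneg unfolding RS_def by auto
        ultimately show ?thesis by (simp add: divide_le_eq_1 div_by_1 field_simps mult_le_cancel_left1 mult_left_mono)
      qed
      moreover have "0 \<le> mu R / card R" if "R \<in> RS" for R
        using that nonneg unfolding RS_def by auto
      ultimately show ?thesis unfolding Bx_def s0_def by (auto simp: PiE_iff)
    qed
    moreover have "sum (s0 R) R = mu R" if "R \<in> RS" for R
    proof -
      have "card R \<noteq> 0" using that finR[OF that] unfolding RS_def by simp
      then show ?thesis unfolding s0_def using that by simp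
    qed
    ultimately show ?thesis unfolding K_def by auto
  qed
  then have Kne: "K \<noteq> {}" by auto
  define M where "M = (\<Sum>R\<in>RS. mu R)"
  have inKb: "s R j \<in> (if R \<in> RS \<and> j \<in> R then {0..mu R} else {0})" if "s \<in> K" for s R j
    using that unfolding K_def Bx_def by (simp add: PiE_iff)
  have inK: "0 \<le> s R j \<and> s R j \<le> mu R" if "s \<in> K" "R \<in> RS" "j \<in> R" for s R j
    using inKb[OF that(1), of R j] that by simp
  have inK0: "s R j = 0" if "s \<in> K" "\<not> (R \<in> RS \<and> j \<in> R)" for s R j
    using inKb[OF that(1), of R j] that by simp
  have inKsum: "sum (s R) R = mu R" if "s \<in> K" "R \<in> RS" for s R
    using that unfolding K_def by auto
  have loadK: "load N s m \<in> {0..M}" if "s \<in> K" for s m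
  proof -
    have "0 \<le> s R m \<and> s R m \<le> mu R" if "R \<in> RS" for R
      using inK[OF \<open>s \<in> K\<close> that] inK0[OF \<open>s \<in> K\<close>, of R m] that nonneg unfolding RS_def by (cases "m \<in> R") auto
    then show ?thesis unfolding load_def M_def RS_def[symmetric]
      by (auto intro: sum_nonneg sum_mono)
  qed
  define F where "F = (\<lambda>m y. integral {0..y} (f m))"
  define Phi where "Phi = (\<lambda>s. \<Sum>m\<in>N. F m (load N s m))"
  have loadc: "continuous_on UNIV (\<lambda>s. load N s m)" for m
    unfolding load_def by (intro continuous_on_sum coord)
  have "continuous_on K Phi"
    unfolding Phi_def
  proof (intro continuous_on_sum)
    fix m assume m: "m \<in> N"
    have "continuous_on {0..M} (F m)" unfolding F_def by (rule F_cont[OF cont[OF m]])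
    then show "continuous_on K (\<lambda>s. F m (load N s m))"
      by (rule continuous_on_compose2[OF _ continuous_on_subset[OF loadc]]) (auto intro: loadK)
  qed
  then obtain s where sK: "s \<in> K" and smin: "\<And>t. t \<in> K \<Longrightarrow> Phi s \<le> Phi t"
    using continuous_attains_inf[OF cK Kne] by blast
  have cp: "consumption_profile N mu s"
    unfolding consumption_profile_def
  proof (intro allI impI conjI)
    fix R j assume R: "R \<subseteq> N \<and> R \<noteq> {}"
    then have RR: "R \<in> RS" unfolding RS_def by auto
    show "0 \<le> s R j" using inK[OF sK RR] inK0[OF sK] by (cases "j \<in> R") auto
    show "j \<notin> R \<Longrightarrow> s R j = 0" using inK0[OF sK] by auto
    show "sum (s R) R = mu R" using inKsum[OF sK RR] .
  qed
  have eqm: "f k (load N s k) \<le> f j (load N s j)"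
    if R: "R \<subseteq> N" "R \<noteq> {}" and k: "k \<in> R" and pos: "0 < s R k" and j: "j \<in> R" for R k j
  proof (rule ccontr)
    assume "\<not> ?thesis"
    then have lt: "f j (load N s j) < f k (load N s k)" by simp
    then have jk: "j \<noteq> k" by auto
    have RR: "R \<in> RS" using R unfolding RS_def by auto
    have kN: "k \<in> N" and jN: "j \<in> N" using R k j by auto
    define xk where "xk = load N s k"
    define xj where "xj = load N s j"
    define \<delta> where "\<delta> = (f k xk - f j xj) / 2"
    have dpos: "\<delta> > 0" using lt unfolding \<delta>_def xk_def xj_def by simp
    have xj0: "xj \<ge> 0" and xk0: "xk \<ge> 0" using loadK[OF sK] unfolding xj_def xk_def by auto
    obtain d1 where d1: "d1 > 0" "\<And>y. y \<in> {0..} \<Longrightarrow> dist y xj < d1 \<Longrightarrow> dist (f j y) (f j xj) < \<delta>"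
      using cont[OF jN] xj0 dpos unfolding continuous_on_iff by (metis atLeast_iff)
    obtain d2 where d2: "d2 > 0" "\<And>y. y \<in> {0..} \<Longrightarrow> dist y xk < d2 \<Longrightarrow> dist (f k y) (f k xk) < \<delta>"
      using cont[OF kN] xk0 dpos unfolding continuous_on_iff by (metis atLeast_iff)
    define \<epsilon> where "\<epsilon> = min (s R k) (min d1 d2) / 2"
    have epos: "\<epsilon> > 0" and ele: "\<epsilon> \<le> s R k" and e1: "\<epsilon> < d1" and e2: "\<epsilon> < d2"
      unfolding \<epsilon>_def using pos d1 d2 by auto
    have sRk_le: "s R k \<le> xk"
    proof -
      have "s R k = (\<Sum>R'\<in>{R}. s R' k)" by simp
      also have "\<dots> \<le> (\<Sum>R'\<in>RS. s R' k)"
        by (rule sum_mono2[OF finRS]) (use RR cp in \<open>auto simp: consumption_profile_def RS_def\<close>)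
      finally show ?thesis unfolding xk_def load_def RS_def .
    qed
    define g where "g = (\<lambda>m. if m = k then s R k - \<epsilon> else if m = j then s R j + \<epsilon> else s R m)"
    define t where "t = s(R := g)"
    have sjk: "s R j + s R k \<le> mu R"
    proof -
      have "s R j + s R k = sum (s R) {j, k}" using jk by simp
      also have "\<dots> \<le> sum (s R) R"
        by (rule sum_mono2[OF finR[OF RR]]) (use j k inK[OF sK RR] in auto)
      finally show ?thesis using inKsum[OF sK RR] by simp
    qed
    have tK: "t \<in> K"
    proof -
      have "t R' m \<in> (if R' \<in> RS \<and> m \<in> R' then {0..mu R'} else {0})" for R' m
      proof (cases "R' = R")
        case False
        then show ?thesis using inKb[OF sK, of R' m] unfolding t_def by simp
      next
        case True
        show ?thesis
        proof (cases "m = k \<or> m = j")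
          case True
          then show ?thesis using \<open>R' = R\<close> RR inK[OF sK RR k] inK[OF sK RR j] ele epos sjk k j jk
            unfolding t_def g_def by auto
        next
          case False
          then show ?thesis using \<open>R' = R\<close> inKb[OF sK, of R m] unfolding t_def g_def by auto
        qed
      qed
      then have "t \<in> Bx" unfolding Bx_def by (simp add: PiE_iff)
      moreover have "sum (t R') R' = mu R'" if "R' \<in> RS" for R'
      proof (cases "R' = R")
        case True
        have "sum g R = sum (s R) R"
        proof -
          have "sum g R = g k + g j + sum g (R - {k, j})"
            using finR[OF RR] k j jk by (simp add: sum.remove insert_Diff_if Diff_insert2[symmetric])
          moreover have "sum (s R) R = s R k + s R j + sum (s R) (R - {k, j})"
            using finR[OF RR] k j jk by (simp add: sum.remove insert_Diff_if Diff_insert2[symmetric])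
          moreover have "sum g (R - {k, j}) = sum (s R) (R - {k, j})"
            by (rule sum.cong) (auto simp: g_def)
          ultimately show ?thesis unfolding g_def using jk by simp
        qed
        then show ?thesis using True inKsum[OF sK that] unfolding t_def by simp
      next
        case False
        then show ?thesis using inKsum[OF sK that] unfolding t_def by simp
      qed
      ultimately show ?thesis unfolding K_def by auto
    qed
    have lt_eq: "load N t m = load N s m + (if m = k then - \<epsilon> else if m = j then \<epsilon> else 0)" for m
      unfolding t_def using load_upd[OF fin R, of s g m] jk by (auto simp: g_def)
    have Phidiff: "Phi t - Phi s = (F k (xk - \<epsilon>) - F k xk) + (F j (xj + \<epsilon>) - F j xj)"
    proof -
      have "Phi t - Phi s = (\<Sum>m\<in>N. F m (load N t m) - F m (load N s m))"
        unfolding Phi_def by (simp add: sum_subtractf)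
      also have "\<dots> = (\<Sum>m\<in>N. (if m = k then F k (xk - \<epsilon>) - F k xk else 0) + (if m = j then F j (xj + \<epsilon>) - F j xj else 0))"
        by (rule sum.cong) (use jk in \<open>auto simp: lt_eq xk_def xj_def\<close>)
      also have "\<dots> = (F k (xk - \<epsilon>) - F k xk) + (F j (xj + \<epsilon>) - F j xj)"
        using kN jN fin by (simp add: sum.distrib)
      finally show ?thesis .
    qed
    have b1: "F j (xj + \<epsilon>) - F j xj \<le> \<epsilon> * f j (xj + \<epsilon>)"
      using int_bounds(1)[OF mono[OF jN] cont[OF jN], of xj "xj + \<epsilon>"] xj0 epos unfolding F_def by simp
    have b2: "\<epsilon> * f k (xk - \<epsilon>) \<le> F k xk - F k (xk - \<epsilon>)"
      using int_bounds(2)[OF mono[OF kN] cont[OF kN], of "xk - \<epsilon>" xk] xk0 epos ele sRk_le unfolding F_def by simp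
    have c1: "f j (xj + \<epsilon>) < f j xj + \<delta>"
      using d1(2)[of "xj + \<epsilon>"] xj0 epos e1 by (auto simp: dist_real_def)
    have c2: "f k xk - \<delta> < f k (xk - \<epsilon>)"
      using d2(2)[of "xk - \<epsilon>"] xk0 epos e2 ele sRk_le by (auto simp: dist_real_def)
    have "\<epsilon> * f j (xj + \<epsilon>) < \<epsilon> * (f j xj + \<delta>)" using c1 epos by simp
    moreover have "\<epsilon> * (f k xk - \<delta>) < \<epsilon> * f k (xk - \<epsilon>)" using c2 epos by simp
    moreover have "\<epsilon> * (f j xj + \<delta>) = \<epsilon> * (f k xk - \<delta>)" unfolding \<delta>_def by (simp add: field_simps)
    ultimately have "Phi t - Phi s < 0" using Phidiff b1 b2 by linarith
    with smin[OF tK] show False by simp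
  qed
  show ?thesis using cp eqm by blast
qed

lemma eq_sol_unique:
  assumes fin: "finite S" and ne: "S \<noteq> {}" and mono: "\<And>j. j \<in> S \<Longrightarrow> mono_on {0..} (f j)"
    and e1: "eq_sol f S \<mu> c" and e2: "eq_sol f S \<mu> c'"
  shows "c = c'"
proof (rule ccontr)
  have gen: False if ea: "eq_sol f S \<mu> a" and eb: "eq_sol f S \<mu> b" and ab: "a < b" for a b
  proof -
    obtain x where x: "\<forall>k\<in>S. 0 \<le> x k" "sum x S = \<mu>" "\<forall>k\<in>S. f k (x k) = a"
      using ea unfolding eq_sol_def by blast
    obtain y where y: "\<forall>k\<in>S. 0 \<le> y k" "sum y S = \<mu>" "\<forall>k\<in>S. f k (y k) = b"
      using eb unfolding eq_sol_def by blast
    have "x k < y k" if k: "k \<in> S" for k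
    proof (rule ccontr)
      assume "\<not> x k < y k"
      then have le: "y k \<le> x k" by simp
      have "f k (y k) \<le> f k (x k)"
        by (rule mono_onD[OF mono[OF k]]) (use x(1) y(1) k le in auto)
      moreover have "f k (x k) = a" "f k (y k) = b" using x(3) y(3) k by auto
      ultimately show False using \<open>a < b\<close> by linarith
    qed
    then have "sum x S < sum y S" using fin ne by (intro sum_strict_mono) simp_all
    then show False using x y by simp
  qed
  assume "c \<noteq> c'"
  then show False using gen[OF e1 e2] gen[OF e2 e1] by linarith
qed

lemma eqz_some:
  assumes fin: "finite S" and ne: "S \<noteq> {}" and mono: "\<And>j. j \<in> S \<Longrightarrow> mono_on {0..} (f j)"
  shows "eqz f S \<mu> = Some c \<longleftrightarrow> eq_sol f S \<mu> c"
proof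
  assume "eqz f S \<mu> = Some c"
  then have ex: "\<exists>c. eq_sol f S \<mu> c" and c: "c = (THE c. eq_sol f S \<mu> c)"
    unfolding eqz_def by (auto split: if_splits)
  then obtain c0 where c0: "eq_sol f S \<mu> c0" by blast
  have "(THE c. eq_sol f S \<mu> c) = c0"
    using c0 eq_sol_unique[where f=f, OF fin ne mono] by blast
  then show "eq_sol f S \<mu> c" using c c0 by simp
next
  assume e: "eq_sol f S \<mu> c"
  have "(THE c. eq_sol f S \<mu> c) = c"
    using e eq_sol_unique[where f=f, OF fin ne mono] by blast
  then show "eqz f S \<mu> = Some c" using e unfolding eqz_def by auto
qed

lemma game_structure:
  fixes N :: "nat set" and f :: "nat \<Rightarrow> real \<Rightarrow> real" and mu :: "nat set \<Rightarrow> real" and s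
  assumes fin: "finite N" and Nne: "N \<noteq> {}"
    and mono: "\<And>j. j \<in> N \<Longrightarrow> mono_on {0..} (f j)"
    and cp: "consumption_profile N mu s"
    and eqm: "\<forall>R. R \<subseteq> N \<and> R \<noteq> {} \<longrightarrow> (\<forall>k\<in>R. 0 < s R k \<longrightarrow> (\<forall>j\<in>R. f k (load N s k) \<le> f j (load N s j)))"
  shows "h_G f mu N = Max ((\<lambda>k. f k (load N s k)) ` N)
     \<and> P_G f mu N = {k \<in> N. f k (load N s k) = Max ((\<lambda>k. f k (load N s k)) ` N)}"
proof -
  define x where "x = load N s"
  define cs where "cs = Max ((\<lambda>k. f k (x k)) ` N)"
  define Q where "Q = {k \<in> N. f k (x k) = cs}"
  define RS where "RS = {R. R \<subseteq> N \<and> R \<noteq> {}}"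
  have finRS: "finite RS" unfolding RS_def using fin by (auto intro: finite_subset[of _ "Pow N"])
  have finR: "R \<subseteq> N \<Longrightarrow> finite R" for R using fin finite_subset by blast
  have snn: "0 \<le> s R k" if "R \<in> RS" for R k using cp that unfolding consumption_profile_def RS_def by auto
  have sout: "s R k = 0" if "R \<in> RS" "k \<notin> R" for R k using cp that unfolding consumption_profile_def RS_def by auto
  have ssum: "sum (s R) R = mu R" if "R \<in> RS" for R using cp that unfolding consumption_profile_def RS_def by auto
  have le_cs: "f k (x k) \<le> cs" if "k \<in> N" for k unfolding cs_def using fin that by (intro Max_ge) auto
  have cs_in: "cs \<in> (\<lambda>k. f k (x k)) ` N" unfolding cs_def using fin Nne by (intro Max_in) auto
  then have Qne: "Q \<noteq> {}" unfolding Q_def by auto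
  have QN: "Q \<subseteq> N" unfolding Q_def by auto
  have finQ: "finite Q" using QN fin finite_subset by blast
  have ltQ: "f k (x k) < cs" if "k \<in> N" "k \<notin> Q" for k using le_cs[OF that(1)] that unfolding Q_def by auto
  have zero: "s R k = 0" if R: "R \<in> RS" "k \<in> R" "j \<in> R" "f j (x j) < f k (x k)" for R k j
  proof (rule ccontr)
    assume "s R k \<noteq> 0"
    then have pos: "0 < s R k" using snn[OF R(1), of k] by auto
    have "R \<subseteq> N \<and> R \<noteq> {}" using R(1) unfolding RS_def by auto
    then have "\<forall>k\<in>R. 0 < s R k \<longrightarrow> (\<forall>j\<in>R. f k (load N s k) \<le> f j (load N s j))" using eqm by blast
    then have "f k (x k) \<le> f j (x j)" using R pos unfolding x_def by blast
    then show False using R(4) by simp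
  qed
  have xnn: "0 \<le> x k" for k unfolding x_def load_def RS_def[symmetric] using snn by (auto intro: sum_nonneg)
  have sumS: "(\<Sum>k\<in>S. x k) = (\<Sum>R\<in>RS. \<Sum>k\<in>S. s R k)" for S
    unfolding x_def load_def RS_def[symmetric] by (rule sum.swap)
  have inner: "(\<Sum>k\<in>S. s R k) = (\<Sum>k\<in>S \<inter> R. s R k)" if "R \<in> RS" "finite S" for R S
    by (rule sum.mono_neutral_right) (use that sout in auto)
  have inner_le: "(\<Sum>k\<in>S. s R k) \<le> mu R" if "R \<in> RS" "finite S" for R S
  proof -
    have "(\<Sum>k\<in>S \<inter> R. s R k) \<le> (\<Sum>k\<in>R. s R k)"
      using that snn by (intro sum_mono2) (auto simp: RS_def intro: finR)
    then show ?thesis using inner[OF that] ssum[OF that(1)] by simp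
  qed
  have inner_eq: "(\<Sum>k\<in>S. s R k) = mu R" if "R \<in> RS" "finite S" "R \<subseteq> S" for R S
    using inner[OF that(1,2)] ssum[OF that(1)] that(3) by (simp add: Int_absorb1)
  have inner_nn: "0 \<le> (\<Sum>k\<in>S. s R k)" if "R \<in> RS" for R S using snn[OF that] by (simp add: sum_nonneg)
  have zeroQ: "(\<Sum>k\<in>S. s R k) = 0" if zq: "R \<in> RS" "\<not> R \<subseteq> Q" "S \<subseteq> Q" for R S
  proof -
    obtain j where j: "j \<in> R" "j \<notin> Q" using zq(2) by blast
    have jN: "j \<in> N" using zq(1) j unfolding RS_def by auto
    show ?thesis
    proof (rule sum.neutral, intro ballI)
      fix k assume k: "k \<in> S"
      show "s R k = 0"
      proof (cases "k \<in> R")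
        case True
        have "f k (x k) = cs" using k zq(3) unfolding Q_def by auto
        then show ?thesis using zero[OF zq(1) True j(1)] ltQ[OF jN j(2)] by simp
      qed (use sout zq(1) in auto)
    qed
  qed
  have Tsub: "{R. R \<subseteq> S \<and> R \<noteq> {}} = {R \<in> RS. R \<subseteq> S}" if "S \<subseteq> N" for S
    using that unfolding RS_def by auto
  have Tle: "(\<Sum>R\<in>{R. R \<subseteq> S \<and> R \<noteq> {}}. mu R) \<le> (\<Sum>k\<in>S. x k)" if "S \<subseteq> N" for S
  proof -
    have fS: "finite S" using that fin finite_subset by blast
    have "(\<Sum>R\<in>{R. R \<subseteq> S \<and> R \<noteq> {}}. mu R) = (\<Sum>R\<in>RS. if R \<subseteq> S then mu R else 0)"
      unfolding Tsub[OF that] using finRS by (simp add: sum.inter_filter)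
    also have "\<dots> \<le> (\<Sum>R\<in>RS. \<Sum>k\<in>S. s R k)"
      by (rule sum_mono) (use inner_eq fS inner_nn in auto)
    finally show ?thesis using sumS by simp
  qed
  have TQ: "(\<Sum>R\<in>{R. R \<subseteq> Q \<and> R \<noteq> {}}. mu R) = (\<Sum>k\<in>Q. x k)"
  proof -
    have "(\<Sum>R\<in>{R. R \<subseteq> Q \<and> R \<noteq> {}}. mu R) = (\<Sum>R\<in>RS. if R \<subseteq> Q then mu R else 0)"
      unfolding Tsub[OF QN] using finRS by (simp add: sum.inter_filter)
    also have "\<dots> = (\<Sum>R\<in>RS. \<Sum>k\<in>Q. s R k)"
      by (rule sum.cong) (use inner_eq finQ zeroQ in auto)
    finally show ?thesis using sumS by simp
  qed
  have monoQ: "\<And>j. j \<in> Q \<Longrightarrow> mono_on {0..} (f j)" using mono QN by auto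
  have solQ: "eq_sol f Q (\<Sum>k\<in>Q. x k) cs" unfolding eq_sol_def using xnn
    by (intro exI[of _ x]) (auto simp: Q_def)
  have EQ: "E_G f mu Q = Some cs"
    unfolding E_G_def TQ using eqz_some[OF finQ Qne monoQ] solQ by simp
  have MQ: "M_G f mu Q = {}"
  proof (rule ccontr)
    assume "M_G f mu Q \<noteq> {}"
    then obtain S' where S': "S' \<noteq> {}" "S' \<subseteq> Q"
      and nz: "\<And>\<mu>. 0 \<le> \<mu> \<Longrightarrow> \<mu> \<le> (\<Sum>R\<in>{R. R \<subseteq> Q \<and> R \<inter> S' \<noteq> {}}. mu R) \<Longrightarrow> eqz f S' \<mu> \<noteq> E_G f mu Q"
      unfolding M_G_def by blast
    have finS': "finite S'" using S' finQ finite_subset by blast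
    have "(\<Sum>k\<in>S'. x k) \<le> (\<Sum>R\<in>{R. R \<subseteq> Q \<and> R \<inter> S' \<noteq> {}}. mu R)"
    proof -
      have set: "{R. R \<subseteq> Q \<and> R \<inter> S' \<noteq> {}} = {R \<in> RS. R \<subseteq> Q \<and> R \<inter> S' \<noteq> {}}"
        using QN unfolding RS_def by auto
      have "(\<Sum>R\<in>RS. \<Sum>k\<in>S'. s R k) \<le> (\<Sum>R\<in>RS. if R \<subseteq> Q \<and> R \<inter> S' \<noteq> {} then mu R else 0)"
      proof (rule sum_mono)
        fix R assume R: "R \<in> RS"
        show "(\<Sum>k\<in>S'. s R k) \<le> (if R \<subseteq> Q \<and> R \<inter> S' \<noteq> {} then mu R else 0)"
        proof (cases "R \<subseteq> Q")
          case False then show ?thesis using zeroQ[OF R False S'(2)] by simp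
        next
          case True
          show ?thesis
          proof (cases "R \<inter> S' = {}")
            case True
            then show ?thesis using inner[OF R finS'] by (simp add: Int_commute)
          qed (use inner_le[OF R finS'] True in simp)
        qed
      qed
      then show ?thesis unfolding set using finRS sumS by (simp add: sum.inter_filter)
    qed
    moreover have "eqz f S' (\<Sum>k\<in>S'. x k) = E_G f mu Q"
    proof -
      have "eq_sol f S' (\<Sum>k\<in>S'. x k) cs" unfolding eq_sol_def using xnn S'(2)
        by (intro exI[of _ x]) (auto simp: Q_def)
      moreover have monoS': "\<And>j. j \<in> S' \<Longrightarrow> mono_on {0..} (f j)" using mono S'(2) QN by auto
      ultimately show ?thesis using EQ eqz_some[OF finS' S'(1) monoS'] by auto
    qed
    ultimately show False using nz[of "\<Sum>k\<in>S'. x k"] xnn by (auto intro: sum_nonneg)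
  qed
  have QD: "Q \<in> D_G f mu N" unfolding D_G_def using Qne QN EQ MQ by auto
  have Dle: "c \<le> cs \<and> (c = cs \<longrightarrow> S \<subseteq> Q)" if SD: "S \<in> D_G f mu N" and Ec: "E_G f mu S = Some c" for S c
  proof -
    have Sne: "S \<noteq> {}" and SN: "S \<subseteq> N" and MS: "M_G f mu S = {}" using SD unfolding D_G_def by auto
    have finS: "finite S" using SN fin finite_subset by blast
    have monoS: "\<And>j. j \<in> S \<Longrightarrow> mono_on {0..} (f j)" using mono SN by auto
    have solS: "eq_sol f S (\<Sum>R\<in>{R. R \<subseteq> S \<and> R \<noteq> {}}. mu R) c"
      using Ec eqz_some[OF finS Sne monoS] unfolding E_G_def by auto
    have c_le: "c \<le> cs"
    proof (rule ccontr)
      assume "\<not> c \<le> cs"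
      obtain y where y: "\<forall>k\<in>S. 0 \<le> y k" "sum y S = (\<Sum>R\<in>{R. R \<subseteq> S \<and> R \<noteq> {}}. mu R)" "\<forall>k\<in>S. f k (y k) = c"
        using solS unfolding eq_sol_def by blast
      have "x k < y k" if k: "k \<in> S" for k
      proof (rule ccontr)
        assume "\<not> x k < y k"
        then have "f k (y k) \<le> f k (x k)" using mono_onD[OF monoS[OF k], of "y k" "x k"] k y xnn[of k] by auto
        then show False using y k le_cs[of k] SN \<open>\<not> c \<le> cs\<close> by auto
      qed
      then have "sum x S < sum y S" using finS Sne by (intro sum_strict_mono) auto
      then show False using Tle[OF SN] y by simp
    qed
    moreover have "S \<subseteq> Q" if ceq: "c = cs"
    proof (rule ccontr)
      assume "\<not> S \<subseteq> Q"
      define S' where "S' = S - Q"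
      have S'ne: "S' \<noteq> {}" and S'S: "S' \<subseteq> S" unfolding S'_def using \<open>\<not> S \<subseteq> Q\<close> by auto
      have finS': "finite S'" using finS S'S finite_subset by blast
      have "S' \<notin> M_G f mu S" using MS by auto
      then obtain \<mu> where mu0: "0 \<le> \<mu>" and mule: "\<mu> \<le> (\<Sum>R\<in>{R. R \<subseteq> S \<and> R \<inter> S' \<noteq> {}}. mu R)"
        and eqS': "eqz f S' \<mu> = E_G f mu S"
        unfolding M_G_def using S'ne S'S by blast
      have monoS': "\<And>j. j \<in> S' \<Longrightarrow> mono_on {0..} (f j)" using mono S'S SN by auto
      have "eq_sol f S' \<mu> cs" using eqS' Ec ceq eqz_some[OF finS' S'ne monoS'] by auto
      then obtain y where y: "\<forall>k\<in>S'. 0 \<le> y k" "sum y S' = \<mu>" "\<forall>k\<in>S'. f k (y k) = cs"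
        unfolding eq_sol_def by blast
      have "x k < y k" if k: "k \<in> S'" for k
      proof (rule ccontr)
        assume "\<not> x k < y k"
        then have "f k (y k) \<le> f k (x k)" using mono_onD[OF monoS'[OF k], of "y k" "x k"] k y xnn[of k] by auto
        moreover have "f k (x k) < cs" using ltQ k S'S SN unfolding S'_def by auto
        ultimately show False using y k by auto
      qed
      then have lt: "sum x S' < \<mu>" using finS' S'ne y(2) by (metis sum_strict_mono)
      have "(\<Sum>R\<in>{R. R \<subseteq> S \<and> R \<inter> S' \<noteq> {}}. mu R) \<le> sum x S'"
      proof -
        have set: "{R. R \<subseteq> S \<and> R \<inter> S' \<noteq> {}} = {R \<in> RS. R \<subseteq> S \<and> R \<inter> S' \<noteq> {}}"
          using SN unfolding RS_def by auto
        have "(\<Sum>R\<in>RS. if R \<subseteq> S \<and> R \<inter> S' \<noteq> {} then mu R else 0) \<le> (\<Sum>R\<in>RS. \<Sum>k\<in>S'. s R k)"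
        proof (rule sum_mono)
          fix R assume R: "R \<in> RS"
          show "(if R \<subseteq> S \<and> R \<inter> S' \<noteq> {} then mu R else 0) \<le> (\<Sum>k\<in>S'. s R k)"
          proof (cases "R \<subseteq> S \<and> R \<inter> S' \<noteq> {}")
            case True
            then obtain j where j: "j \<in> R" "j \<in> S'" by auto
            have finRR: "finite R" using R finR unfolding RS_def by auto
            have "(\<Sum>k\<in>R - S'. s R k) = 0"
            proof (rule sum.neutral, intro ballI)
              fix k assume k: "k \<in> R - S'"
              then have "k \<in> Q" using True unfolding S'_def by auto
              then have "f k (x k) = cs" unfolding Q_def by auto
              moreover have "f j (x j) < cs" using ltQ j S'S SN unfolding S'_def by auto
              ultimately show "s R k = 0" using zero[OF R _ j(1)] k by auto
            qed
            then have "mu R = (\<Sum>k\<in>R \<inter> S'. s R k)"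
              using ssum[OF R] sum.Int_Diff[OF finRR, of "s R" S'] by simp
            also have "\<dots> = (\<Sum>k\<in>S'. s R k)" using inner[OF R finS'] by (simp add: Int_commute)
            finally show ?thesis using True by simp
          qed (use inner_nn[OF R] in auto)
        qed
        then show ?thesis unfolding set using finRS sumS by (simp add: sum.inter_filter)
      qed
      then show False using lt mule by simp
    qed
    ultimately show ?thesis by blast
  qed
  have finD: "finite (D_G f mu N)"
    by (rule finite_subset[of _ "Pow N"]) (use fin in \<open>auto simp: D_G_def\<close>)
  have hcs: "h_G f mu N = cs"
    unfolding h_G_def
  proof (rule Max_eqI)
    show "finite ((\<lambda>S. the (E_G f mu S)) ` D_G f mu N)" using finD by simp
    show "cs \<in> (\<lambda>S. the (E_G f mu S)) ` D_G f mu N" using QD EQ by force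
    fix y assume "y \<in> (\<lambda>S. the (E_G f mu S)) ` D_G f mu N"
    then obtain S where S: "S \<in> D_G f mu N" "y = the (E_G f mu S)" by auto
    then have "E_G f mu S = Some y" unfolding D_G_def by auto
    then show "y \<le> cs" using Dle[OF S(1)] by blast
  qed
  have "P_G f mu N = Q"
    unfolding P_G_def hcs
  proof
    show "\<Union>{S \<in> D_G f mu N. E_G f mu S = Some cs} \<subseteq> Q" using Dle by blast
    show "Q \<subseteq> \<Union>{S \<in> D_G f mu N. E_G f mu S = Some cs}" using QD EQ by blast
  qed
  then show ?thesis using hcs unfolding Q_def cs_def x_def by simp
qed

theorem mainTheorem15:
  fixes n :: nat and f :: "nat \<Rightarrow> real \<Rightarrow> real" and mu :: "nat set \<Rightarrow> real"
  assumes mono: "\<And>j. j \<in> {1..n} \<Longrightarrow> mono_on {0..} (f j)"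
    and cont: "\<And>j. j \<in> {1..n} \<Longrightarrow> continuous_on {0..} (f j)"
    and mu_nonneg: "\<And>R. R \<subseteq> {1..n} \<Longrightarrow> R \<noteq> {} \<Longrightarrow> 0 \<le> mu R"
  shows "(\<exists>s. consumption_profile (P_G f mu {1..n}) mu s \<and>
            (\<forall>j\<in>P_G f mu {1..n}. f j (load (P_G f mu {1..n}) s j) = h_G f mu {1..n}))
       \<and> (P_G f mu {1..n} \<noteq> {1..n} \<longrightarrow>
            h_G f mu {1..n} > h_G f (mu_minus mu {1..n} (P_G f mu {1..n})) ({1..n} - P_G f mu {1..n}))"
proof (cases "n = 0")
  case True
  then have N: "{1..n} = ({}::nat set)" by simp
  have D: "D_G f mu {1..n} = {}" unfolding D_G_def N by auto
  have P: "P_G f mu {1..n} = {}" unfolding P_G_def D by simp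
  have "consumption_profile {} mu (\<lambda>_ _. 0)" unfolding consumption_profile_def by auto
  then show ?thesis using P N by auto
next
  case False
  define N where "N = {1..n}"
  have fin: "finite N" unfolding N_def by simp
  have Nne: "N \<noteq> {}" unfolding N_def using False by auto
  have monoN: "\<And>j. j \<in> N \<Longrightarrow> mono_on {0..} (f j)" using mono unfolding N_def .
  have contN: "\<And>j. j \<in> N \<Longrightarrow> continuous_on {0..} (f j)" using cont unfolding N_def .
  have nnN: "\<And>R. R \<subseteq> N \<Longrightarrow> R \<noteq> {} \<Longrightarrow> 0 \<le> mu R" using mu_nonneg unfolding N_def .
  obtain s where cp: "consumption_profile N mu s"
    and eqm: "\<forall>R. R \<subseteq> N \<and> R \<noteq> {} \<longrightarrow> (\<forall>k\<in>R. 0 < s R k \<longrightarrow> (\<forall>j\<in>R. f k (load N s k) \<le> f j (load N s j)))"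
    using equilibrium_exists[where f=f and mu=mu, OF fin monoN contN nnN] by blast
  define x where "x = load N s"
  define cs where "cs = Max ((\<lambda>k. f k (x k)) ` N)"
  define Q where "Q = {k \<in> N. f k (x k) = cs}"
  have GS: "h_G f mu N = cs" "P_G f mu N = Q"
    using game_structure[where f=f and mu=mu and s=s, OF fin Nne monoN cp eqm] unfolding Q_def cs_def x_def by auto
  have QN: "Q \<subseteq> N" unfolding Q_def by auto
  have le_cs: "f k (x k) \<le> cs" if "k \<in> N" for k unfolding cs_def using fin that by (intro Max_ge) auto
  have ltQ: "f k (x k) < cs" if "k \<in> N" "k \<notin> Q" for k using le_cs[OF that(1)] that unfolding Q_def by auto
  have snn: "0 \<le> s R k" if "R \<subseteq> N" "R \<noteq> {}" for R k using cp that unfolding consumption_profile_def by auto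
  have sout: "s R k = 0" if "R \<subseteq> N" "R \<noteq> {}" "k \<notin> R" for R k using cp that unfolding consumption_profile_def by auto
  have ssum: "sum (s R) R = mu R" if "R \<subseteq> N" "R \<noteq> {}" for R using cp that unfolding consumption_profile_def by auto
  have zeroQ: "s R k = 0" if R: "R \<subseteq> N" "R \<noteq> {}" "\<not> R \<subseteq> Q" and k: "k \<in> Q" for R k
  proof (cases "k \<in> R")
    case True
    obtain j where j: "j \<in> R" "j \<notin> Q" using R(3) by blast
    have jN: "j \<in> N" using j R by auto
    have fk: "f k (x k) = cs" using k unfolding Q_def by auto
    show ?thesis
    proof (rule ccontr)
      assume "s R k \<noteq> 0"
      then have pos: "0 < s R k" using snn[OF R(1,2), of k] by auto
      have "\<forall>k\<in>R. 0 < s R k \<longrightarrow> (\<forall>j\<in>R. f k (load N s k) \<le> f j (load N s j))" using eqm R by blast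
      then have "f k (x k) \<le> f j (x j)" using True j pos unfolding x_def by blast
      then show False using fk ltQ[OF jN j(2)] by simp
    qed
  qed (use sout R in auto)
  have finR: "R \<subseteq> N \<Longrightarrow> finite R" for R using fin finite_subset by blast
  have finRS: "finite {R. R \<subseteq> N \<and> R \<noteq> {}}" using fin by (auto intro: finite_subset[of _ "Pow N"])
  have partA: "consumption_profile Q mu s \<and> (\<forall>j\<in>Q. f j (load Q s j) = cs)"
  proof
    show "consumption_profile Q mu s" using cp QN unfolding consumption_profile_def by blast
    show "\<forall>j\<in>Q. f j (load Q s j) = cs"
    proof
      fix j assume j: "j \<in> Q"
      have "load Q s j = load N s j"
        unfolding load_def
        by (rule sum.mono_neutral_left[OF finRS]) (use QN zeroQ j in auto)
      then show "f j (load Q s j) = cs" using j unfolding Q_def x_def by simp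
    qed
  qed
  have partB: "h_G f (mu_minus mu N Q) (N - Q) < cs" if QneN: "Q \<noteq> N"
  proof -
    define N' where "N' = N - Q"
    define mu' where "mu' = mu_minus mu N Q"
    define s' where "s' = (\<lambda>R' j. \<Sum>R\<in>{R. R \<subseteq> N \<and> R \<noteq> {} \<and> R - Q = R'}. s R j)"
    have N'ne: "N' \<noteq> {}" unfolding N'_def using QneN QN by auto
    have finN': "finite N'" unfolding N'_def using fin by simp
    have finF: "finite {R. R \<subseteq> N \<and> R \<noteq> {} \<and> R - Q = R'}" for R'
      by (rule finite_subset[OF _ finRS]) auto
    have zero_out: "s R j = 0" if "R \<subseteq> N" "R \<noteq> {}" "R - Q = R'" "R' \<noteq> {}" "j \<notin> R'" for R R' j
    proof (cases "j \<in> R")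
      case True
      then have "j \<in> Q" using that by auto
      moreover have "\<not> R \<subseteq> Q" using that by auto
      ultimately show ?thesis using zeroQ that by auto
    qed (use sout that in auto)
    have cp': "consumption_profile N' mu' s'"
      unfolding consumption_profile_def
    proof (intro allI impI conjI)
      fix R' j assume R': "R' \<subseteq> N' \<and> R' \<noteq> {}"
      show "0 \<le> s' R' j" unfolding s'_def by (rule sum_nonneg) (use snn in auto)
      show "j \<notin> R' \<Longrightarrow> s' R' j = 0" unfolding s'_def
        by (rule sum.neutral) (use zero_out R' in auto)
      have "sum (s' R') R' = (\<Sum>R\<in>{R. R \<subseteq> N \<and> R \<noteq> {} \<and> R - Q = R'}. \<Sum>j\<in>R'. s R j)"
        unfolding s'_def by (rule sum.swap)
      also have "\<dots> = (\<Sum>R\<in>{R. R \<subseteq> N \<and> R \<noteq> {} \<and> R - Q = R'}. mu R)"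
      proof (rule sum.cong[OF refl])
        fix R assume R: "R \<in> {R. R \<subseteq> N \<and> R \<noteq> {} \<and> R - Q = R'}"
        have "(\<Sum>j\<in>R'. s R j) = (\<Sum>j\<in>R. s R j)"
          by (rule sum.mono_neutral_left) (use R finR zero_out R' in auto)
        then show "(\<Sum>j\<in>R'. s R j) = mu R" using ssum R by auto
      qed
      finally show "sum (s' R') R' = mu' R'" unfolding mu'_def mu_minus_def .
    qed
    have load': "load N' s' j = x j" if j: "j \<in> N'" for j
    proof -
      define S where "S = {R \<in> {R. R \<subseteq> N \<and> R \<noteq> {}}. R - Q \<noteq> {}}"
      have finS: "finite S" unfolding S_def using finRS by (rule finite_subset[rotated]) auto
      have finT: "finite {R'. R' \<subseteq> N' \<and> R' \<noteq> {}}" using finN' by (auto intro: finite_subset[of _ "Pow N'"])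
      have img: "(\<lambda>R. R - Q) ` S \<subseteq> {R'. R' \<subseteq> N' \<and> R' \<noteq> {}}" unfolding S_def N'_def by auto
      have "load N' s' j = (\<Sum>R'\<in>{R'. R' \<subseteq> N' \<and> R' \<noteq> {}}. \<Sum>R\<in>{R. R \<in> S \<and> R - Q = R'}. s R j)"
        unfolding load_def s'_def
        by (rule sum.cong[OF refl], rule sum.cong) (auto simp: S_def)
      also have "\<dots> = (\<Sum>R\<in>S. s R j)" by (rule sum.group[OF finS finT img])
      also have "\<dots> = x j" unfolding x_def load_def S_def
        by (rule sum.mono_neutral_left[OF finRS]) (use sout j in \<open>auto simp: N'_def\<close>)
      finally show ?thesis .
    qed
    have eqm': "\<forall>R'. R' \<subseteq> N' \<and> R' \<noteq> {} \<longrightarrow> (\<forall>k\<in>R'. 0 < s' R' k \<longrightarrow> (\<forall>j\<in>R'. f k (load N' s' k) \<le> f j (load N' s' j)))"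
    proof (rule allI, rule impI, rule ballI, rule impI, rule ballI)
      fix R' k j assume R': "R' \<subseteq> N' \<and> R' \<noteq> {}" and k: "k \<in> R'" and pos: "0 < s' R' k" and j: "j \<in> R'"
      have "\<exists>R. R \<subseteq> N \<and> R \<noteq> {} \<and> R - Q = R' \<and> 0 < s R k"
      proof (rule ccontr)
        assume nex: "\<not> (\<exists>R. R \<subseteq> N \<and> R \<noteq> {} \<and> R - Q = R' \<and> 0 < s R k)"
        have allle: "\<forall>R\<in>{R. R \<subseteq> N \<and> R \<noteq> {} \<and> R - Q = R'}. s R k \<le> 0"
        proof
          fix R assume "R \<in> {R. R \<subseteq> N \<and> R \<noteq> {} \<and> R - Q = R'}"
          then have RR: "R \<subseteq> N" "R \<noteq> {}" "R - Q = R'" by auto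
          show "s R k \<le> 0"
          proof (rule ccontr)
            assume "\<not> s R k \<le> 0"
            then have "0 < s R k" by simp
            with RR nex show False by blast
          qed
        qed
        have "s' R' k \<le> 0" unfolding s'_def by (rule sum_nonpos) (rule allle[rule_format])
        then show False using pos by simp
      qed
      then obtain R where R: "R \<subseteq> N" "R \<noteq> {}" "R - Q = R'" and posR: "0 < s R k" by blast
      have "\<forall>k\<in>R. 0 < s R k \<longrightarrow> (\<forall>j\<in>R. f k (load N s k) \<le> f j (load N s j))" using eqm R by blast
      then have "f k (x k) \<le> f j (x j)" using R k j posR unfolding x_def by blast
      moreover have "k \<in> N'" "j \<in> N'" using R' k j by auto
      ultimately show "f k (load N' s' k) \<le> f j (load N' s' j)" using load'[of k] load'[of j] by simp
    qed
    have monoN': "\<And>j. j \<in> N' \<Longrightarrow> mono_on {0..} (f j)" using monoN unfolding N'_def by auto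
    have "h_G f mu' N' = Max ((\<lambda>k. f k (load N' s' k)) ` N')"
      using game_structure[where f=f and mu=mu' and s=s', OF finN' N'ne monoN' cp' eqm'] by blast
    also have "\<dots> < cs"
    proof -
      have "Max ((\<lambda>k. f k (load N' s' k)) ` N') \<in> (\<lambda>k. f k (load N' s' k)) ` N'"
        using finN' N'ne by (intro Max_in) auto
      then obtain k where k: "k \<in> N'" "Max ((\<lambda>k. f k (load N' s' k)) ` N') = f k (load N' s' k)" by auto
      then show ?thesis using load'[OF k(1)] ltQ[of k] unfolding N'_def by auto
    qed
    finally show ?thesis unfolding mu'_def N'_def .
  qed
  show ?thesis
    using partA partB GS unfolding N_def[symmetric] by auto
qed

end
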